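(* Let $\mu_0,\mu_1,\dots,\mu_\ell$ be the sequence of distributions obtained by applying a sequence of lossy moves $v_1^\downarrow,\dots,v_\ell^\downarrow$ to $\mu_0$. Then there is a sequence of distributions $\mu'_0,\mu'_1,\dots,\mu'_\ell$ obtained from $\mu'_0=\mu_0$ by a weight-constrained sequence of moves such that $\mu'_i(\{x\})\ge\mu_i(\{x\})$ for every $1\le i\le\ell$ and every $x\in\mathbb R$.
   Context: A distribution is a finite set $\{(x_1,m_1),\dots,(x_k,m_k)\}$ with $m_i>0$; signed distributions allow arbitrary real $m_i$; $\mu(A)=\sum_{x_i\in A}m_i$; $M_j[\mu]=\sum_i m_ix_i^j$. A move $v=([a,b],\delta)$ has $b-a=1$, $\delta$ a signed distribution on $[a,b]$ with $M_0[\delta]=M_1[\delta]=0$, center $\frac{a+b}2$; it can be applied to $\mu$ if $\mu+\delta$ is a distribution, giving $v\mu=\mu+\delta$. The lossy move $v^\downarrow=([a,b],\delta-\{(\frac{a+b}2,1)\})$ is applied analogously. For a sequence of moves producing $\mu_0,\dots,\mu_\ell$, $\mu_{\max}\{x>a\}=\max_i\mu_i\{x>a\}$; the sequence is weight-constrained if for every $a\in\mathbb R$ the number of its moves centered in $(a,\infty)$ is at most $\mu_{\max}\{x>a\}$. *)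

theory Defs
  imports Complex_Main
begin

text \<open>A (signed) distribution is represented as a finitely supported function
  real => real: the point x carries mass d x; the pairs (x_i, m_i) are the points
  of the support with their masses.\<close>

type_synonym sdist = "real \<Rightarrow> real"

definition supp :: "sdist \<Rightarrow> real set" where
  "supp d = {x. d x \<noteq> 0}"

definition signed_dist :: "sdist \<Rightarrow> bool" where
  "signed_dist d \<longleftrightarrow> finite (supp d)"

definition is_dist :: "sdist \<Rightarrow> bool" where
  "is_dist d \<longleftrightarrow> signed_dist d \<and> (\<forall>x. d x \<ge> 0)"

definition mass :: "sdist \<Rightarrow> real set \<Rightarrow> real" where
  "mass d A = (\<Sum>x\<in>supp d \<inter> A. d x)"

definition moment :: "nat \<Rightarrow> sdist \<Rightarrow> real" where
  "moment j d = (\<Sum>x\<in>supp d. d x * x ^ j)"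

text \<open>A move is a pair (a, delta) standing for ([a, a+1], delta).\<close>
type_synonym move = "real \<times> sdist"

definition is_move :: "move \<Rightarrow> bool" where
  "is_move v \<longleftrightarrow> signed_dist (snd v) \<and> supp (snd v) \<subseteq> {fst v .. fst v + 1}
     \<and> moment 0 (snd v) = 0 \<and> moment 1 (snd v) = 0"

definition center :: "move \<Rightarrow> real" where
  "center v = (fst v + (fst v + 1)) / 2"

definition applies :: "move \<Rightarrow> sdist \<Rightarrow> sdist \<Rightarrow> bool" where
  "applies v mu nu \<longleftrightarrow> nu = (\<lambda>x. mu x + snd v x) \<and> is_dist nu"

definition lossy_applies :: "move \<Rightarrow> sdist \<Rightarrow> sdist \<Rightarrow> bool" where
  "lossy_applies v mu nu \<longleftrightarrow>
     nu = (\<lambda>x. mu x + snd v x - (if x = center v then 1 else 0)) \<and> is_dist nu"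

definition move_seq :: "nat \<Rightarrow> (nat \<Rightarrow> move) \<Rightarrow> (nat \<Rightarrow> sdist) \<Rightarrow> bool" where
  "move_seq l v mu \<longleftrightarrow> is_dist (mu 0) \<and>
     (\<forall>i\<in>{1..l}. is_move (v i) \<and> applies (v i) (mu (i - 1)) (mu i))"

definition mu_max :: "nat \<Rightarrow> (nat \<Rightarrow> sdist) \<Rightarrow> real \<Rightarrow> real" where
  "mu_max l mu a = Max ((\<lambda>i. mass (mu i) {a<..}) ` {0..l})"

definition weight_constrained :: "nat \<Rightarrow> (nat \<Rightarrow> move) \<Rightarrow> (nat \<Rightarrow> sdist) \<Rightarrow> bool" where
  "weight_constrained l v mu \<longleftrightarrow>
     (\<forall>a::real. real (card {i\<in>{1..l}. center (v i) > a}) \<le> mu_max l mu a)"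

end

theory Submission
  imports Defs
begin

lemma mass_single: "mass d {x} = d x"
  by (cases "d x = 0") (auto simp: mass_def supp_def)

lemma mass_sup: "finite S \<Longrightarrow> supp d \<subseteq> S \<Longrightarrow> mass d A = sum d (S \<inter> A)"
  unfolding mass_def by (rule sum.mono_neutral_left) (auto simp: supp_def)

theorem mainTheorem8:
  fixes l :: nat and v :: "nat \<Rightarrow> move" and mu :: "nat \<Rightarrow> sdist"
  assumes "is_dist (mu 0)"
    and "\<forall>i\<in>{1..l}. is_move (v i) \<and> lossy_applies (v i) (mu (i - 1)) (mu i)"
  shows "\<exists>w mu'. mu' 0 = mu 0 \<and> move_seq l w mu' \<and> weight_constrained l w mu' \<and>
           (\<forall>i\<in>{1..l}. \<forall>x::real. mass (mu' i) {x} \<ge> mass (mu i) {x})"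
proof -
  define c where "c j = center (v j)" for j
  define cnt where "cnt i x = real (card {j\<in>{1..i}. c j = x})" for i x
  define mu' where "mu' i x = mu i x + cnt i x" for i x
  have cnt0: "cnt 0 = (\<lambda>x. 0)" by (auto simp: cnt_def fun_eq_iff)
  have cntS: "cnt i x = cnt (i - 1) x + (if x = c i then 1 else 0)" if "i \<ge> 1" for i x
  proof -
    have e: "{j\<in>{1..i}. c j = x} = (if x = c i then insert i {j\<in>{1..i-1}. c j = x} else {j\<in>{1..i-1}. c j = x})"
      proof -
      obtain k where k: "i = Suc k" using \<open>i \<ge> 1\<close> by (cases i) auto
      show ?thesis unfolding k by (auto simp: le_Suc_eq)
    qed
    have "i \<notin> {j\<in>{1..i-1}. c j = x}" using that by (simp add: le_diff_conv2)
    moreover have "finite {j\<in>{1..i-1}. c j = x}" by simp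
    ultimately show ?thesis unfolding cnt_def e by (cases "x = c i") (simp_all add: card_insert_if del: insert_iff)
  qed
  have cnt_nn: "cnt i x \<ge> 0" for i x by (simp add: cnt_def)
  have cnt_supp: "{x. cnt i x \<noteq> 0} \<subseteq> c ` {1..i}" for i
    by (auto simp: cnt_def card_eq_0_iff)
  have mud: "is_dist (mu i)" if "i \<le> l" for i
    proof (cases i)
    case 0 then show ?thesis using assms by simp
  next
    case (Suc k) then have "i \<in> {1..l}" using that by simp
    then show ?thesis using assms unfolding lossy_applies_def by blast
  qed
  have mu'd: "is_dist (mu' i)" if "i \<le> l" for i
  proof -
    have "supp (mu' i) \<subseteq> supp (mu i) \<union> c ` {1..i}"
      using cnt_supp[of i] by (auto simp: supp_def mu'_def)
    moreover have "finite (supp (mu i))" using mud[OF that] by (simp add: is_dist_def signed_dist_def)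
    ultimately have "finite (supp (mu' i))" by (meson finite_Un finite_atLeastAtMost finite_imageI finite_subset)
    moreover have "mu' i x \<ge> 0" for x using mud[OF that] cnt_nn[of i x]
      by (simp add: is_dist_def mu'_def)
    ultimately show ?thesis by (simp add: is_dist_def signed_dist_def)
  qed
  have ms: "move_seq l v mu'"
    unfolding move_seq_def
  proof (intro conjI ballI)
    show "is_dist (mu' 0)" using mu'd by simp
  next
    fix i assume i: "i \<in> {1..l}"
    then show "is_move (v i)" using assms by auto
    have la: "lossy_applies (v i) (mu (i - 1)) (mu i)" using assms i by auto
    have "mu' i = (\<lambda>x. mu' (i - 1) x + snd (v i) x)"
      using la cntS[of i] i by (auto simp: fun_eq_iff mu'_def lossy_applies_def c_def)
    then show "applies (v i) (mu' (i - 1)) (mu' i)"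
      using mu'd[of i] i by (simp add: applies_def)
  qed
  have wc: "weight_constrained l v mu'"
    unfolding weight_constrained_def
  proof
    fix a :: real
    define S where "S = supp (mu l) \<union> c ` {1..l}"
    have finS: "finite S" using mud[of l] by (simp add: S_def is_dist_def signed_dist_def)
    have s1: "supp (mu l) \<subseteq> S" by (simp add: S_def)
    have s2: "supp (mu' l) \<subseteq> S" using cnt_supp[of l] by (auto simp: S_def supp_def mu'_def)
    have "mass (mu' l) {a<..} = sum (mu l) (S \<inter> {a<..}) + sum (cnt l) (S \<inter> {a<..})"
      using mass_sup[OF finS s2] by (simp add: mu'_def sum.distrib)
    also have "sum (mu l) (S \<inter> {a<..}) = mass (mu l) {a<..}" using mass_sup[OF finS s1] by simp
    also have "mass (mu l) {a<..} \<ge> 0" using mud[of l] by (auto simp: mass_def is_dist_def intro: sum_nonneg)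
    hence "mass (mu l) {a<..} + sum (cnt l) (S \<inter> {a<..}) \<ge> sum (cnt l) (S \<inter> {a<..})" by simp
    moreover have "sum (cnt l) (S \<inter> {a<..}) = real (card {i\<in>{1..l}. center (v i) > a})"
    proof -
      have "sum (cnt l) (S \<inter> {a<..}) = (\<Sum>y\<in>S \<inter> {a<..}. \<Sum>j\<in>{j\<in>{j\<in>{1..l}. c j > a}. c j = y}. 1)"
        unfolding cnt_def by (intro sum.cong refl) (simp, metis (lifting))
      also have "\<dots> = (\<Sum>j\<in>{j\<in>{1..l}. c j > a}. (1::real))"
        by (rule sum.group) (use finS in \<open>auto simp: S_def\<close>)
      finally show ?thesis by (simp add: c_def)
    qed
    ultimately have "real (card {i\<in>{1..l}. center (v i) > a}) \<le> mass (mu' l) {a<..}" by linarith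
    also have "\<dots> \<le> mu_max l mu' a" unfolding mu_max_def by (rule Max_ge) auto
    finally show "real (card {i\<in>{1..l}. center (v i) > a}) \<le> mu_max l mu' a" .
  qed
  have dom: "\<forall>i\<in>{1..l}. \<forall>x::real. mass (mu' i) {x} \<ge> mass (mu i) {x}"
    using cnt_nn by (simp add: mass_single mu'_def)
  have "mu' 0 = mu 0" by (simp add: mu'_def cnt0 fun_eq_iff)
  with ms wc dom show ?thesis by blast
qed

end
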